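(* Let $M_n=V\,{\rm diag}(\Lambda_{n1},\dots,\Lambda_{nd})V^{-1}$ and $\hat M_n=M_n+\sigma W_n$, $n=1,\dots,N$, with $V$ real invertible, $\Lambda_{ni}$ real, and $\|W_n\|\le1$; let $U_\circ$ be orthogonal with ${\rm low}(U_\circ^TM_nU_\circ)=0$ for all $n$; let $Y$ be skew-symmetric with $\|Y\|=1$ and $X$ any skew-symmetric matrix. For $\alpha,\sigma$ put $U=U_\circ e^{\alpha Y}$, $K_n=U^T\hat M_nU$ and $$g_n={\rm low}(K_n),\quad\dot g_n={\rm low}([K_n,X]),\quad\ddot g_n={\rm low}([[K_n,X],X]),$$ regarded as functions of $(\alpha,\sigma)$; let $\partial_\alpha$, $\partial_\sigma$ denote partial derivatives at $(\alpha,\sigma)=(0,0)$, and let $g_n,\dot g_n,\ddot g_n$ without derivative denote their values at $(0,0)$. Define $$\tilde A_\alpha=\Big|\sum_{n=1}^N{\rm Tr}\big(\dot g_n^T\partial_\alpha\dot g_n+\dot g_n^T\partial_\alpha\dot g_n+\ddot g_n^T\partial_\alpha g_n+\partial_\alpha g_n^T\ddot g_n\big)\Big|,$$ $$\tilde A_\sigma=\Big|\sum_{n=1}^N{\rm Tr}\big(\dot g_n^T\partial_\sigma\dot g_n+\partial_\sigma\dot g_n^T\dot g_n+\ddot g_n^T\partial_\sigma g_n+\partial_\sigma g_n^T\ddot g_n\big)\Big|.$$ Then $\tilde A_\alpha\le A_\alpha\|X\|^2$ and $\tilde A_\sigma\le A_\sigma\|X\|^2$ with $A_\alpha=32\sum_{n=1}^N\|M_n\|^2$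 and $A_\sigma=16\sqrt N\sqrt{\sum_{n=1}^N\|M_n\|^2}$.
   Context: All matrices are real $d\times d$. ${\rm low}(A)$ is the strictly lower-triangular part of $A$; $[A,B]=AB-BA$; $\|\cdot\|$ is the Frobenius norm; $e^{\alpha Y}$ is the matrix exponential. *)

theory Defs
  imports "HOL-Analysis.Analysis"
begin

text \<open>Matrices are real d x d matrices of type real^'d^'d with matrix product (**).
  The norm of real^'d^'d is the Frobenius norm. Indices are ordered by a linear order on 'd.\<close>

primrec mpow :: "real^'d^'d \<Rightarrow> nat \<Rightarrow> real^'d^'d" where
  "mpow A 0 = mat 1"
| "mpow A (Suc k) = A ** mpow A k"

text \<open>Matrix exponential (note: exp on real^'d^'d would be componentwise).\<close>
definition mexp :: "real^'d^'d \<Rightarrow> real^'d^'d" where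
  "mexp A = (\<Sum>k. (1 / fact k) *\<^sub>R mpow A k)"

definition low :: "real^('d::{finite,linorder})^('d::{finite,linorder}) \<Rightarrow> real^('d::{finite,linorder})^('d::{finite,linorder})" where
  "low A = (\<chi> i j. if j < i then A $ i $ j else 0)"

definition commut :: "real^'d^'d \<Rightarrow> real^'d^'d \<Rightarrow> real^'d^'d" where
  "commut A B = A ** B - B ** A"

definition diagm :: "('d \<Rightarrow> real) \<Rightarrow> real^'d^'d" where
  "diagm L = (\<chi> i j. if i = j then L i else 0)"

definition skew :: "real^'d^'d \<Rightarrow> bool" where
  "skew A \<longleftrightarrow> transpose A = - A"

definition Kmat :: "real^'d^'d \<Rightarrow> real^'d^'d \<Rightarrow> real^'d^'d \<Rightarrow> real^'d^'d \<Rightarrow> real \<Rightarrow> real \<Rightarrow> real^'d^'d" where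
  "Kmat U0 Y Mn Wn a s =
     (let U = U0 ** mexp (a *\<^sub>R Y) in transpose U ** (Mn + s *\<^sub>R Wn) ** U)"

end

theory Submission
  imports Defs
begin


lemma norm_sq_sum: "(norm (A::real^'n^'m))\<^sup>2 = (\<Sum>i\<in>UNIV. \<Sum>j\<in>UNIV. (A$i$j)\<^sup>2)"
  unfolding power2_norm_eq_inner by (simp add: inner_vec_def power2_eq_square)

lemma norm_sq_row: "(norm (x::real^'n))\<^sup>2 = (\<Sum>j\<in>UNIV. (x$j)\<^sup>2)"
  unfolding power2_norm_eq_inner by (simp add: inner_vec_def power2_eq_square)

lemma norm_transpose: "norm (transpose (A::real^'n^'m)) = norm A"
proof -
  have "(norm (transpose A))\<^sup>2 = (norm A)\<^sup>2"
    unfolding norm_sq_sum transpose_def by (simp, rule sum.swap)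
  then show ?thesis by (simp add: power2_eq_iff_nonneg)
qed

lemma cs_sq: "((x::real^'n) \<bullet> y)\<^sup>2 \<le> (norm x)\<^sup>2 * (norm y)\<^sup>2"
proof -
  have "\<bar>x \<bullet> y\<bar> \<le> norm x * norm y" by (rule Cauchy_Schwarz_ineq2)
  then have "\<bar>x \<bullet> y\<bar>\<^sup>2 \<le> (norm x * norm y)\<^sup>2" by (rule power_mono) simp
  then show ?thesis by (simp add: power_mult_distrib)
qed

lemma norm_mult_le: "norm ((A::real^'n^'m) ** (B::real^'p^'n)) \<le> norm A * norm B"
proof -
  have e: "(A ** B)$i$j = A$i \<bullet> (transpose B)$j" for i j
    by (simp add: matrix_matrix_mult_def inner_vec_def transpose_def)
  have "(norm (A ** B))\<^sup>2 = (\<Sum>i\<in>UNIV. \<Sum>j\<in>UNIV. (A$i \<bullet> (transpose B)$j)\<^sup>2)"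
    unfolding norm_sq_sum e ..
  also have "\<dots> \<le> (\<Sum>i\<in>UNIV. \<Sum>j\<in>UNIV. (norm (A$i))\<^sup>2 * (norm ((transpose B)$j))\<^sup>2)"
    by (intro sum_mono cs_sq)
  also have "\<dots> = (\<Sum>i\<in>UNIV. (norm (A$i))\<^sup>2) * (\<Sum>j\<in>UNIV. (norm ((transpose B)$j))\<^sup>2)"
    by (simp add: sum_product)
  also have "\<dots> = (norm A)\<^sup>2 * (norm (transpose B))\<^sup>2"
    by (simp add: power2_norm_eq_inner inner_vec_def)
  also have "\<dots> = (norm A * norm B)\<^sup>2" by (simp add: norm_transpose power_mult_distrib)
  finally show ?thesis by (simp add: power2_le_iff_abs_le)
qed

lemma norm_orth_vec: "orthogonal_matrix (Q::real^'n^'n) \<Longrightarrow> norm (Q *v x) = norm x"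
proof -
  assume "orthogonal_matrix Q"
  then have "orthogonal_transformation ((*v) Q)"
    unfolding orthogonal_transformation_matrix by (simp add: matrix_vector_mul_linear)
  then show ?thesis by (rule orthogonal_transformation_norm)
qed

lemma norm_mult_orth: "orthogonal_matrix (U::real^'n^'n) \<Longrightarrow> norm ((A::real^'n^'m) ** U) = norm A"
proof -
  assume U: "orthogonal_matrix U"
  have r: "(A ** U)$i = (A$i) v* U" for i
    by (simp add: matrix_matrix_mult_def vector_matrix_mult_def vec_eq_iff)
  have "(norm (A ** U))\<^sup>2 = (\<Sum>i\<in>UNIV. (norm ((A ** U)$i))\<^sup>2)"
    by (simp add: power2_norm_eq_inner inner_vec_def)
  also have "\<dots> = (\<Sum>i\<in>UNIV. (norm (A$i))\<^sup>2)"
  proof -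
    have "norm (A$i v* U) = norm (A$i)" for i
      using norm_orth_vec[of "transpose U" "A$i"] U by simp
    then show ?thesis by (simp add: r)
  qed
  also have "\<dots> = (norm A)\<^sup>2" by (simp add: power2_norm_eq_inner inner_vec_def)
  finally show ?thesis by (simp add: power2_eq_iff_nonneg)
qed

lemma norm_conj_orth: "orthogonal_matrix (U::real^'n^'n) \<Longrightarrow> norm (transpose U ** A ** U) = norm A"
proof -
  assume U: "orthogonal_matrix U"
  have "norm (transpose U ** A ** U) = norm (transpose U ** A)" using U by (rule norm_mult_orth)
  also have "\<dots> = norm (transpose (transpose U ** A))" by (rule norm_transpose[symmetric])
  also have "\<dots> = norm (transpose A ** U)" by (simp add: matrix_transpose_mul)
  also have "\<dots> = norm A" using U by (simp add: norm_mult_orth norm_transpose)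
  finally show ?thesis .
qed

lemma trace_inner: "trace (transpose (A::real^'n^'n) ** B) = A \<bullet> B"
  unfolding trace_def matrix_matrix_mult_def transpose_def inner_vec_def by (simp, rule sum.swap)

lemma trace_le: "\<bar>trace (transpose (A::real^'n^'n) ** B)\<bar> \<le> norm A * norm B"
  by (simp add: trace_inner Cauchy_Schwarz_ineq2)

lemma norm_low: "norm (low (A::real^'n::{finite,linorder}^'n::{finite,linorder})) \<le> norm A"
proof -
  have "(norm (low A))\<^sup>2 \<le> (norm A)\<^sup>2"
    unfolding norm_sq_sum low_def by (auto intro!: sum_mono)
  then show ?thesis by (simp add: power2_le_iff_abs_le)
qed

lemma norm_commut: "norm (commut A B) \<le> 2 * norm A * norm (B::real^'n^'n)"
proof -
  have "norm (commut A B) \<le> norm (A ** B) + norm (B ** A)" unfolding commut_def by (rule norm_triangle_ineq4)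
  also have "\<dots> \<le> norm A * norm B + norm B * norm A" by (intro add_mono norm_mult_le)
  finally show ?thesis by simp
qed



lemma bb_mult: "bounded_bilinear (\<lambda>(A::real^'n^'m) (B::real^'p^'n). A ** B)"
proof
  show "\<exists>K. \<forall>a b. norm ((a::real^'n^'m) ** (b::real^'p^'n)) \<le> norm a * norm b * K"
    by (rule exI[of _ 1]) (simp add: norm_mult_le)
qed (simp_all add: matrix_matrix_mult_def vec_eq_iff sum.distrib algebra_simps sum_distrib_left)

lemma bl_transpose: "bounded_linear (transpose :: real^'n^'m \<Rightarrow> real^'m^'n)"
proof (rule bounded_linear_intro[where K=1])
  show "norm (transpose x) \<le> norm x * 1" for x :: "real^'n^'m" by (simp add: norm_transpose)
qed (simp_all add: transpose_def vec_eq_iff)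

lemma bl_low: "bounded_linear (low :: real^'n::{finite,linorder}^'n::{finite,linorder} \<Rightarrow> _)"
proof (rule bounded_linear_intro[where K=1])
  show "norm (low x) \<le> norm x * 1" for x :: "real^'n::{finite,linorder}^'n::{finite,linorder}" using norm_low[of x] by simp
qed (simp_all add: low_def vec_eq_iff)

lemma bl_commut: "bounded_linear (\<lambda>A::real^'n^'n. commut A X)"
proof (rule bounded_linear_intro[where K="2 * norm X"])
  show "norm (commut A X) \<le> norm A * (2 * norm X)" for A
    using norm_commut[of A X] by (simp add: algebra_simps)
qed (simp_all add: commut_def matrix_add_ldistrib bounded_bilinear.add_left[OF bb_mult]
      scalar_matrix_assoc matrix_scalar_ac algebra_simps)

lemma mpow_bound: "norm (mpow A k) \<le> norm (mat 1::real^'n^'n) * norm (A::real^'n^'n) ^ k"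
proof (induction k)
  case 0 then show ?case by simp
next
  case (Suc k)
  have "norm (mpow A (Suc k)) \<le> norm A * norm (mpow A k)" by (simp add: norm_mult_le)
  also have "\<dots> \<le> norm A * (norm (mat 1::real^'n^'n) * norm A ^ k)"
    by (rule mult_left_mono[OF Suc]) simp
  finally show ?case by (simp add: algebra_simps)
qed

lemma mexp_summable_norm: "summable (\<lambda>k. norm ((1 / fact k) *\<^sub>R mpow (A::real^'n^'n) k))"
proof (rule summable_comparison_test)
  let ?c = "norm (mat 1::real^'n^'n)"
  show "\<exists>N. \<forall>n\<ge>N. norm (norm ((1 / fact n) *\<^sub>R mpow A n)) \<le> ?c * (inverse (fact n) * norm A ^ n)"
  proof (intro exI allI impI)
    fix n :: nat
    have "norm (norm ((1 / fact n) *\<^sub>R mpow A n)) = norm (mpow A n) / fact n" by simp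
    also have "\<dots> \<le> ?c * norm A ^ n / fact n"
      by (rule divide_right_mono[OF mpow_bound]) simp
    finally show "norm (norm ((1 / fact n) *\<^sub>R mpow A n)) \<le> ?c * (inverse (fact n) * norm A ^ n)"
      by (simp add: field_simps)
  qed
  show "summable (\<lambda>n. ?c * (inverse (fact n) * norm A ^ n))"
    by (rule summable_mult[OF summable_exp])
qed

lemma mexp_rem: "norm (mexp A - mat 1 - A) \<le> norm (mat 1::real^'n^'n) * (norm (A::real^'n^'n))\<^sup>2 * exp (norm A)"
proof -
  let ?c = "norm (mat 1::real^'n^'n)"
  define f where "f k = (1 / fact k) *\<^sub>R mpow A k" for k
  have sn: "summable (\<lambda>k. norm (f k))" unfolding f_def by (rule mexp_summable_norm)
  have s: "summable f" by (rule summable_norm_cancel[OF sn])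
  have "mexp A = (\<Sum>n. f (n + 2)) + (\<Sum>i<2. f i)"
    unfolding mexp_def f_def[symmetric] by (rule suminf_split_initial_segment[OF s])
  also have "(\<Sum>i<2. f i) = mat 1 + A" by (simp add: f_def eval_nat_numeral)
  finally have e: "mexp A - mat 1 - A = (\<Sum>n. f (n + 2))" by simp
  have sn2: "summable (\<lambda>n. norm (f (n + 2)))" using sn by (rule summable_ignore_initial_segment)
  have se: "summable (\<lambda>n. ?c * (norm A)\<^sup>2 * (inverse (fact n) * norm A ^ n))"
    by (rule summable_mult[OF summable_exp])
  have pw: "norm (f (n + 2)) \<le> ?c * (norm A)\<^sup>2 * (inverse (fact n) * norm A ^ n)" for n
  proof -
    have "norm (f (n + 2)) = norm (mpow A (n + 2)) / fact (n + 2)" by (simp add: f_def)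
    also have "\<dots> \<le> ?c * norm A ^ (n + 2) / fact (n + 2)"
      by (rule divide_right_mono[OF mpow_bound]) simp
    also have "\<dots> \<le> ?c * norm A ^ (n + 2) / fact n"
    proof -
      have "fact n \<le> (fact (n+2)::real)" by (rule fact_mono) simp
      then show ?thesis by (rule divide_left_mono) (simp_all add: fact_gt_zero)
    qed
    also have "\<dots> = ?c * (norm A)\<^sup>2 * (inverse (fact n) * norm A ^ n)"
      by (simp add: field_simps power_add power2_eq_square)
    finally show ?thesis .
  qed
  have "norm (mexp A - mat 1 - A) \<le> (\<Sum>n. norm (f (n + 2)))"
    unfolding e by (rule summable_norm[OF sn2])
  also have "\<dots> \<le> (\<Sum>n. ?c * (norm A)\<^sup>2 * (inverse (fact n) * norm A ^ n))"
    by (rule suminf_le[OF pw sn2 se])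
  also have "\<dots> = ?c * (norm A)\<^sup>2 * (\<Sum>n. inverse (fact n) * norm A ^ n)"
    by (rule suminf_mult[OF summable_exp])
  also have "(\<Sum>n. inverse (fact n) * norm A ^ n) = exp (norm A)"
    using exp_converges[of "norm A"] by (simp add: sums_iff field_simps)
  finally show ?thesis .
qed

lemma mexp_zero: "mexp (0::real^'n^'n) = mat 1"
  using mexp_rem[of "0::real^'n^'n"] by simp



lemma mexp_deriv: "((\<lambda>a. mexp (a *\<^sub>R Y)) has_vector_derivative (Y::real^'n^'n)) (at 0)"
proof -
  let ?c = "norm (mat 1::real^'n^'n)"
  define C where "C = ?c * (norm Y)\<^sup>2 * exp (norm Y)"
  have b: "norm (mexp (a *\<^sub>R Y) - mat 1 - a *\<^sub>R Y) \<le> C * a\<^sup>2" if "\<bar>a\<bar> \<le> 1" for a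
  proof -
    have "norm (mexp (a *\<^sub>R Y) - mat 1 - a *\<^sub>R Y) \<le> ?c * (\<bar>a\<bar> * norm Y)\<^sup>2 * exp (\<bar>a\<bar> * norm Y)"
      using mexp_rem[of "a *\<^sub>R Y"] by simp
    also have "\<dots> \<le> ?c * (\<bar>a\<bar> * norm Y)\<^sup>2 * exp (norm Y)"
    proof -
      have "\<bar>a\<bar> * norm Y \<le> norm Y" using that by (simp add: mult_left_le_one_le)
      then have "exp (\<bar>a\<bar> * norm Y) \<le> exp (norm Y)" by simp
      then show ?thesis by (rule mult_left_mono) simp
    qed
    also have "\<dots> = C * a\<^sup>2" by (simp add: C_def power_mult_distrib)
    finally show ?thesis .
  qed
  have z: "mexp (0 *\<^sub>R Y) = mat 1" by (simp add: mexp_zero)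
  show ?thesis
    unfolding has_vector_derivative_def has_derivative_iff_norm
  proof
    show "bounded_linear (\<lambda>x. x *\<^sub>R Y)" by (rule bounded_linear_scaleR_left)
    show "((\<lambda>y. norm (mexp (y *\<^sub>R Y) - mexp (0 *\<^sub>R Y) - (y - 0) *\<^sub>R Y) / norm (y - 0)) \<longlongrightarrow> 0) (at 0)"
    proof (rule Lim_null_comparison)
      have key: "norm (mexp (y *\<^sub>R Y) - mat 1 - y *\<^sub>R Y) / \<bar>y\<bar> \<le> C * \<bar>y\<bar>"
        if y: "y \<noteq> 0" "\<bar>y\<bar> \<le> 1" for y :: real
      proof -
        have "norm (mexp (y *\<^sub>R Y) - mat 1 - y *\<^sub>R Y) / \<bar>y\<bar> \<le> C * y\<^sup>2 / \<bar>y\<bar>" by (rule divide_right_mono[OF b[OF y(2)]]) simp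
        also have "\<dots> = C * \<bar>y\<bar>"
          using y(1) by (cases "y > 0") (simp_all add: power2_eq_square)
        finally show ?thesis .
      qed
      show "\<forall>\<^sub>F y in at 0. norm (norm (mexp (y *\<^sub>R Y) - mexp (0 *\<^sub>R Y) - (y - 0) *\<^sub>R Y) / norm (y - 0)) \<le> C * \<bar>y\<bar>"
        unfolding eventually_at
        by (rule exI[of _ 1]) (auto simp: dist_real_def mexp_zero intro!: key)
      have "((\<lambda>y::real. C * \<bar>y\<bar>) \<longlongrightarrow> C * \<bar>0\<bar>) (at 0)" by (intro tendsto_intros)
      then show "((\<lambda>y::real. C * \<bar>y\<bar>) \<longlongrightarrow> 0) (at 0)" by simp
    qed
  qed
qed

lemma vd_lin: "bounded_linear L \<Longrightarrow> (f has_vector_derivative D) (at 0) \<Longrightarrow> vector_derivative (\<lambda>a. L (f a)) (at 0) = L D"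
  by (rule vector_derivative_at, rule bounded_linear.has_vector_derivative)

lemma Kder_alpha:
  fixes U0 M Y :: "real^'n^'n"
  shows "((\<lambda>a. transpose (U0 ** mexp (a *\<^sub>R Y)) ** M ** (U0 ** mexp (a *\<^sub>R Y))) has_vector_derivative
      (transpose U0 ** M ** U0 ** Y + transpose Y ** (transpose U0 ** M ** U0))) (at 0)"
proof -
  have bm: "bounded_bilinear (\<lambda>(A::real^'n^'n) (B::real^'n^'n). A ** B)" by (rule bb_mult)
  have h1: "((\<lambda>a. U0 ** mexp (a *\<^sub>R Y)) has_vector_derivative U0 ** Y) (at 0)"
    by (rule bounded_linear.has_vector_derivative[OF bounded_bilinear.bounded_linear_right[OF bm] mexp_deriv])
  have h2: "((\<lambda>a. transpose (U0 ** mexp (a *\<^sub>R Y))) has_vector_derivative transpose (U0 ** Y)) (at 0)"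
    by (rule bounded_linear.has_vector_derivative[OF bl_transpose h1])
  have h3: "((\<lambda>a. transpose (U0 ** mexp (a *\<^sub>R Y)) ** M) has_vector_derivative transpose (U0 ** Y) ** M) (at 0)"
    by (rule bounded_linear.has_vector_derivative[OF bounded_bilinear.bounded_linear_left[OF bm] h2])
  note h4 = bounded_bilinear.has_vector_derivative[OF bm h3 h1]
  have z: "mexp (0 *\<^sub>R Y) = mat 1" by (simp add: mexp_zero)
  have eq: "transpose (U0 ** mexp (0 *\<^sub>R Y)) ** M ** (U0 ** Y) + transpose (U0 ** Y) ** M ** (U0 ** mexp (0 *\<^sub>R Y))
     = transpose U0 ** M ** U0 ** Y + transpose Y ** (transpose U0 ** M ** U0)"
  proof -
    have e1: "transpose (U0 ** mat 1) ** M ** (U0 ** Y) = transpose U0 ** M ** U0 ** Y"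
      apply (simp only: matrix_mul_rid)
      apply (simp only: matrix_mul_assoc)
      done
    have e2: "transpose (U0 ** Y) ** M ** (U0 ** mat 1) = transpose Y ** (transpose U0 ** M ** U0)"
      apply (simp only: matrix_transpose_mul matrix_mul_rid)
      apply (simp only: matrix_mul_assoc)
      done
    show ?thesis unfolding z e1 e2 ..
  qed
  show ?thesis using h4 unfolding eq .
qed



lemma four_bound:
  fixes a b c d e f h k :: "real^'n^'n"
  shows "\<bar>trace (transpose a ** b + transpose c ** d + transpose e ** f + transpose h ** k)\<bar>
    \<le> norm a * norm b + norm c * norm d + norm e * norm f + norm h * norm k"
proof -
  have "\<bar>trace (transpose a ** b + transpose c ** d + transpose e ** f + transpose h ** k)\<bar>
     \<le> \<bar>trace (transpose a ** b)\<bar> + \<bar>trace (transpose c ** d)\<bar> + \<bar>trace (transpose e ** f)\<bar> + \<bar>trace (transpose h ** k)\<bar>"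
    unfolding trace_add by linarith
  also have "\<dots> \<le> norm a * norm b + norm c * norm d + norm e * norm f + norm h * norm k"
    by (intro add_mono trace_le)
  finally show ?thesis .
qed

lemma lc_bound: "norm (low (commut (A::real^'n::{finite,linorder}^'n::{finite,linorder}) X)) \<le> 2 * norm A * norm X"
  using norm_low[of "commut A X"] norm_commut[of A X] by linarith

lemma lcc_bound: "norm (low (commut (commut (A::real^'n::{finite,linorder}^'n::{finite,linorder}) X) X)) \<le> 4 * norm A * (norm X)\<^sup>2"
proof -
  have "norm (low (commut (commut A X) X)) \<le> 2 * norm (commut A X) * norm X" by (rule lc_bound)
  also have "\<dots> \<le> 2 * (2 * norm A * norm X) * norm X"
    by (intro mult_right_mono mult_left_mono norm_commut) auto
  finally show ?thesis by (simp add: power2_eq_square algebra_simps)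
qed

lemma Ks_der:
  fixes U0 M W :: "real^'n^'n"
  shows "((\<lambda>s. transpose U0 ** (M + s *\<^sub>R W) ** U0) has_vector_derivative (transpose U0 ** W ** U0)) (at 0)"
proof -
  have bm: "bounded_bilinear (\<lambda>(A::real^'n^'n) (B::real^'n^'n). A ** B)" by (rule bb_mult)
  have L: "bounded_linear (\<lambda>B::real^'n^'n. transpose U0 ** B ** U0)"
    using bounded_linear_compose[OF bounded_bilinear.bounded_linear_left[OF bm, of U0]
        bounded_bilinear.bounded_linear_right[OF bm, of "transpose U0"]] by (simp add: o_def)
  have d: "((\<lambda>s::real. M + s *\<^sub>R W) has_vector_derivative W) (at 0)"
    by (auto intro!: derivative_eq_intros)
  show ?thesis by (rule bounded_linear.has_vector_derivative[OF L d])
qed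

lemma sum_le_sqrt: "(\<Sum>n=1..N. (t n::real)) \<le> sqrt (real N) * sqrt (\<Sum>n=1..N. (t n)\<^sup>2)"
proof -
  have "(\<Sum>n=1..N. t n)\<^sup>2 \<le> (\<Sum>n=1..N. (t n)\<^sup>2) * real (card {1..N})"
    by (rule sum_squared_le_sum_of_squares)
  then have "(\<Sum>n=1..N. t n) \<le> sqrt ((\<Sum>n=1..N. (t n)\<^sup>2) * real N)" by (simp add: real_le_rsqrt)
  then show ?thesis by (simp add: real_sqrt_mult mult.commute)
qed

theorem lemma11:
  fixes M W :: "nat \<Rightarrow> real^(('d::{finite,linorder}))^('d::{finite,linorder})"
    and Lam :: "nat \<Rightarrow> ('d::{finite,linorder}) \<Rightarrow> real"
    and V U0 Y X :: "real^('d::{finite,linorder})^('d::{finite,linorder})"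
    and N :: nat
  assumes "invertible V"
    and "\<forall>n\<in>{1..N}. M n = V ** diagm (Lam n) ** matrix_inv V"
    and "\<forall>n\<in>{1..N}. norm (W n) \<le> 1"
    and "orthogonal_matrix U0"
    and "\<forall>n\<in>{1..N}. low (transpose U0 ** M n ** U0) = 0"
    and "skew Y" and "norm Y = 1" and "skew X"
  defines "g \<equiv> \<lambda>n a s. low (Kmat U0 Y (M n) (W n) a s)"
    and "gd \<equiv> \<lambda>n a s. low (commut (Kmat U0 Y (M n) (W n) a s) X)"
    and "gdd \<equiv> \<lambda>n a s. low (commut (commut (Kmat U0 Y (M n) (W n) a s) X) X)"
  defines "Atil_alpha \<equiv> \<bar>\<Sum>n=1..N.
      trace (transpose (gd n 0 0) ** vector_derivative (\<lambda>a. gd n a 0) (at 0)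
           + transpose (gd n 0 0) ** vector_derivative (\<lambda>a. gd n a 0) (at 0)
           + transpose (gdd n 0 0) ** vector_derivative (\<lambda>a. g n a 0) (at 0)
           + transpose (vector_derivative (\<lambda>a. g n a 0) (at 0)) ** gdd n 0 0)\<bar>"
    and "Atil_sigma \<equiv> \<bar>\<Sum>n=1..N.
      trace (transpose (gd n 0 0) ** vector_derivative (\<lambda>s. gd n 0 s) (at 0)
           + transpose (vector_derivative (\<lambda>s. gd n 0 s) (at 0)) ** gd n 0 0
           + transpose (gdd n 0 0) ** vector_derivative (\<lambda>s. g n 0 s) (at 0)
           + transpose (vector_derivative (\<lambda>s. g n 0 s) (at 0)) ** gdd n 0 0)\<bar>"
  shows "Atil_alpha \<le> 32 * (\<Sum>n=1..N. (norm (M n))\<^sup>2) * (norm X)\<^sup>2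
       \<and> Atil_sigma \<le> 16 * sqrt (real N) * sqrt (\<Sum>n=1..N. (norm (M n))\<^sup>2) * (norm X)\<^sup>2"
proof -
  note U0 = assms(4)
  define T where "T n = transpose U0 ** M n ** U0" for n
  define Da where "Da n = T n ** Y + transpose Y ** T n" for n
  define S where "S n = transpose U0 ** W n ** U0" for n
  define x where "x = norm X"
  have x0: "0 \<le> x" by (simp add: x_def)
  have nT: "norm (T n) = norm (M n)" for n unfolding T_def using U0 by (rule norm_conj_orth)
  have nDa: "norm (Da n) \<le> 2 * norm (M n)" for n
  proof -
    have "norm (Da n) \<le> norm (T n ** Y) + norm (transpose Y ** T n)" unfolding Da_def by (rule norm_triangle_ineq)
    also have "\<dots> \<le> norm (T n) * norm Y + norm (transpose Y) * norm (T n)" by (intro add_mono norm_mult_le)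
    finally show ?thesis using assms(7) by (simp add: norm_transpose nT)
  qed
  have nS: "norm (S n) \<le> 1" if "n \<in> {1..N}" for n
    unfolding S_def using norm_conj_orth[OF U0, of "W n"] assms(3) that by simp
  have K0: "Kmat U0 Y (M n) (W n) 0 0 = T n" for n
    by (simp add: Kmat_def Let_def mexp_zero T_def)
  have Ka: "(\<lambda>a. Kmat U0 Y (M n) (W n) a 0) = (\<lambda>a. transpose (U0 ** mexp (a *\<^sub>R Y)) ** M n ** (U0 ** mexp (a *\<^sub>R Y)))" for n
    by (simp add: Kmat_def Let_def)
  have Ks: "(\<lambda>s. Kmat U0 Y (M n) (W n) 0 s) = (\<lambda>s. transpose U0 ** (M n + s *\<^sub>R W n) ** U0)" for n
    by (simp add: Kmat_def Let_def mexp_zero)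
  have dKa: "((\<lambda>a. Kmat U0 Y (M n) (W n) a 0) has_vector_derivative Da n) (at 0)" for n
    unfolding Ka Da_def T_def by (rule Kder_alpha)
  have dKs: "((\<lambda>s. Kmat U0 Y (M n) (W n) 0 s) has_vector_derivative S n) (at 0)" for n
    unfolding Ks S_def by (rule Ks_der)
  have blc: "bounded_linear (\<lambda>A::real^'d::{finite,linorder}^'d::{finite,linorder}. low (commut A X))"
    using bounded_linear_compose[OF bl_low bl_commut[of X]] by (simp add: o_def)
  have vga: "vector_derivative (\<lambda>a. g n a 0) (at 0) = low (Da n)" for n
    unfolding g_def by (rule vd_lin[OF bl_low dKa])
  have vgda: "vector_derivative (\<lambda>a. gd n a 0) (at 0) = low (commut (Da n) X)" for n
    unfolding gd_def by (rule vd_lin[OF blc dKa])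
  have vgs: "vector_derivative (\<lambda>s. g n 0 s) (at 0) = low (S n)" for n
    unfolding g_def by (rule vd_lin[OF bl_low dKs])
  have vgds: "vector_derivative (\<lambda>s. gd n 0 s) (at 0) = low (commut (S n) X)" for n
    unfolding gd_def by (rule vd_lin[OF blc dKs])
  have gd0: "gd n 0 0 = low (commut (T n) X)" for n unfolding gd_def K0 ..
  have gdd0: "gdd n 0 0 = low (commut (commut (T n) X) X)" for n unfolding gdd_def K0 ..
  have ngd0: "norm (gd n 0 0) \<le> 2 * norm (M n) * x" for n
    unfolding gd0 x_def using lc_bound[of "T n" X] nT by simp
  have ngdd0: "norm (gdd n 0 0) \<le> 4 * norm (M n) * x\<^sup>2" for n
    unfolding gdd0 x_def using lcc_bound[of "T n" X] nT by simp
  have nvga: "norm (low (Da n)) \<le> 2 * norm (M n)" for n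
    using norm_low[of "Da n"] nDa[of n] by linarith
  have nvgda: "norm (low (commut (Da n) X)) \<le> 4 * norm (M n) * x" for n
  proof -
    have "norm (low (commut (Da n) X)) \<le> 2 * norm (Da n) * x" unfolding x_def by (rule lc_bound)
    also have "\<dots> \<le> 2 * (2 * norm (M n)) * x" by (intro mult_right_mono mult_left_mono nDa x0) simp
    finally show ?thesis by simp
  qed
  have nvgs: "norm (low (S n)) \<le> 1" if "n \<in> {1..N}" for n
    using norm_low[of "S n"] nS[OF that] by linarith
  have nvgds: "norm (low (commut (S n) X)) \<le> 2 * x" if "n \<in> {1..N}" for n
  proof -
    have "norm (low (commut (S n) X)) \<le> 2 * norm (S n) * x" unfolding x_def by (rule lc_bound)
    also have "\<dots> \<le> 2 * 1 * x" by (intro mult_right_mono mult_left_mono nS that x0) simp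
    finally show ?thesis by simp
  qed
  have A1: "Atil_alpha \<le> (\<Sum>n=1..N. 32 * (norm (M n))\<^sup>2 * x\<^sup>2)"
    unfolding Atil_alpha_def
  proof (rule order_trans[OF sum_abs], rule sum_mono)
    fix n assume "n \<in> {1..N}"
    let ?a = "norm (gd n 0 0)" and ?b = "norm (low (commut (Da n) X))"
      and ?c = "norm (gdd n 0 0)" and ?d = "norm (low (Da n))"
    have "\<bar>trace (transpose (gd n 0 0) ** vector_derivative (\<lambda>a. gd n a 0) (at 0)
           + transpose (gd n 0 0) ** vector_derivative (\<lambda>a. gd n a 0) (at 0)
           + transpose (gdd n 0 0) ** vector_derivative (\<lambda>a. g n a 0) (at 0)
           + transpose (vector_derivative (\<lambda>a. g n a 0) (at 0)) ** gdd n 0 0)\<bar>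
        \<le> ?a * ?b + ?a * ?b + ?c * ?d + ?d * ?c"
      unfolding vga vgda by (rule four_bound)
    also have "\<dots> \<le> (2 * norm (M n) * x) * (4 * norm (M n) * x) + (2 * norm (M n) * x) * (4 * norm (M n) * x)
        + (4 * norm (M n) * x\<^sup>2) * (2 * norm (M n)) + (2 * norm (M n)) * (4 * norm (M n) * x\<^sup>2)"
      by (intro add_mono mult_mono ngd0 ngdd0 nvga nvgda) (simp_all add: x0)
    also have "\<dots> = 32 * (norm (M n))\<^sup>2 * x\<^sup>2" by (simp add: power2_eq_square algebra_simps)
    finally show "\<bar>trace (transpose (gd n 0 0) ** vector_derivative (\<lambda>a. gd n a 0) (at 0)
           + transpose (gd n 0 0) ** vector_derivative (\<lambda>a. gd n a 0) (at 0)
           + transpose (gdd n 0 0) ** vector_derivative (\<lambda>a. g n a 0) (at 0)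
           + transpose (vector_derivative (\<lambda>a. g n a 0) (at 0)) ** gdd n 0 0)\<bar>
        \<le> 32 * (norm (M n))\<^sup>2 * x\<^sup>2" .
  qed
  have A2: "Atil_sigma \<le> (\<Sum>n=1..N. 16 * norm (M n) * x\<^sup>2)"
    unfolding Atil_sigma_def
  proof (rule order_trans[OF sum_abs], rule sum_mono)
    fix n assume n: "n \<in> {1..N}"
    let ?a = "norm (gd n 0 0)" and ?b = "norm (low (commut (S n) X))"
      and ?c = "norm (gdd n 0 0)" and ?d = "norm (low (S n))"
    have "\<bar>trace (transpose (gd n 0 0) ** vector_derivative (\<lambda>s. gd n 0 s) (at 0)
           + transpose (vector_derivative (\<lambda>s. gd n 0 s) (at 0)) ** gd n 0 0
           + transpose (gdd n 0 0) ** vector_derivative (\<lambda>s. g n 0 s) (at 0)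
           + transpose (vector_derivative (\<lambda>s. g n 0 s) (at 0)) ** gdd n 0 0)\<bar>
        \<le> ?a * ?b + ?b * ?a + ?c * ?d + ?d * ?c"
      unfolding vgs vgds by (rule four_bound)
    also have "\<dots> \<le> (2 * norm (M n) * x) * (2 * x) + (2 * x) * (2 * norm (M n) * x)
        + (4 * norm (M n) * x\<^sup>2) * 1 + 1 * (4 * norm (M n) * x\<^sup>2)"
      by (intro add_mono mult_mono ngd0 ngdd0 nvgs[OF n] nvgds[OF n]) (simp_all add: x0)
    also have "\<dots> = 16 * norm (M n) * x\<^sup>2" by (simp add: power2_eq_square algebra_simps)
    finally show "\<bar>trace (transpose (gd n 0 0) ** vector_derivative (\<lambda>s. gd n 0 s) (at 0)
           + transpose (vector_derivative (\<lambda>s. gd n 0 s) (at 0)) ** gd n 0 0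
           + transpose (gdd n 0 0) ** vector_derivative (\<lambda>s. g n 0 s) (at 0)
           + transpose (vector_derivative (\<lambda>s. g n 0 s) (at 0)) ** gdd n 0 0)\<bar>
        \<le> 16 * norm (M n) * x\<^sup>2" .
  qed
  have "(\<Sum>n=1..N. 32 * (norm (M n))\<^sup>2 * x\<^sup>2) = 32 * (\<Sum>n=1..N. (norm (M n))\<^sup>2) * x\<^sup>2"
    by (simp add: sum_distrib_left sum_distrib_right mult.assoc)
  moreover have "(\<Sum>n=1..N. 16 * norm (M n) * x\<^sup>2) \<le> 16 * sqrt (real N) * sqrt (\<Sum>n=1..N. (norm (M n))\<^sup>2) * x\<^sup>2"
  proof -
    have "(\<Sum>n=1..N. 16 * norm (M n) * x\<^sup>2) = 16 * x\<^sup>2 * (\<Sum>n=1..N. norm (M n))"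
      by (simp add: sum_distrib_left sum_distrib_right mult_ac)
    also have "\<dots> \<le> 16 * x\<^sup>2 * (sqrt (real N) * sqrt (\<Sum>n=1..N. (norm (M n))\<^sup>2))"
      by (intro mult_left_mono sum_le_sqrt) simp
    finally show ?thesis by (simp add: mult_ac)
  qed
  ultimately show ?thesis using A1 A2 unfolding x_def by linarith
qed


end
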